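(* In the production planning setting described in the context (general case, intervals may overlap), for every fixed $\pmb{x}\in\mathbb{X}$ the adversarial problem $\max_{\pmb{D}\in\mathcal{U}^d}\sum_{t\in[T]}\max\{f_I(X_t,D_t),f_B(X_t,D_t)\}$ has an optimal solution $\pmb{D}^*\in\mathcal{U}^d$ such that for every $k\in[T]$, $$D^*_k\in\mathcal{D}_k=[\widehat{D}_k-\Delta_k,\widehat{D}_k+\Delta_k]\cap\bigcup_{t\in[T]}\{\widehat{D}_t-\Delta_t,\widehat{D}_t,\widehat{D}_t+\Delta_t\}.$$
   Context: There are $T\ge 1$ periods, $[T]=\{1,\dots,T\}$. Given are a production cost $c^P$, an inventory cost $c^I$, a backordering cost $c^B$ and a selling price $b^P$ (independent of the period), and a set $\mathbb{X}\subseteq\mathbb{R}^T_+$ of feasible production plans $\pmb{x}=(x_1,\dots,x_T)$ described by finitely many linear constraints. For a plan write $X_t=\sum_{i\in[t]}x_i$. For $t\in[T-1]$ let $f_I(X_t,D_t)=c^I(X_t-D_t)$ and $f_B(X_t,D_t)=c^B(D_t-X_t)$; for $t=T$ let $f_I(X_T,D_T)=c^I(X_T-D_T)+c^PX_T-b^PD_T$ and $f_B(X_T,D_T)=c^B(D_T-X_T)+c^PX_T-b^PX_T$. Nominal cumulative demands $\widehat{D}_t\ge 0$ satisfy $\widehat{D}_t\le\widehat{D}_{t+1}$, and deviations satisfy $0\le\Delta_t\le\widehat{D}_t$. The discrete budgeted scenario set is $\mathcal{U}^d=\{\pmb{D}\in\mathbb{R}^T: D_t\le D_{t+1}\ (t\in[T-1]),\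 D_t\in[\widehat{D}_t-\Delta_t,\widehat{D}_t+\Delta_t]\ (t\in[T]),\ |\{t: D_t\ne\widehat{D}_t\}|\le\Gamma^d\}$ with integer $\Gamma^d\in\{0,\dots,T\}$. No non-overlapping assumption on the intervals is made. *)

theory Defs
  imports "HOL-Analysis.Analysis"
begin

text \<open>Vectors indexed by periods 1..T are modelled as functions nat => real;
  only the values at 1..T matter.\<close>

definition plan_set :: "nat \<Rightarrow> nat \<Rightarrow> (nat \<Rightarrow> nat \<Rightarrow> real) \<Rightarrow> (nat \<Rightarrow> real) \<Rightarrow> (nat \<Rightarrow> real) set" where
  "plan_set T m A b = {x. (\<forall>t\<in>{1..T}. 0 \<le> x t) \<and>
       (\<forall>j<m. (\<Sum>i=1..T. A j i * x i) \<le> b j)}"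

definition cumX :: "(nat \<Rightarrow> real) \<Rightarrow> nat \<Rightarrow> real" where
  "cumX x t = (\<Sum>i=1..t. x i)"

definition fI :: "nat \<Rightarrow> real \<Rightarrow> real \<Rightarrow> real \<Rightarrow> nat \<Rightarrow> real \<Rightarrow> real \<Rightarrow> real" where
  "fI T cP cI bP t X D =
     (if t < T then cI * (X - D) else cI * (X - D) + cP * X - bP * D)"

definition fB :: "nat \<Rightarrow> real \<Rightarrow> real \<Rightarrow> real \<Rightarrow> nat \<Rightarrow> real \<Rightarrow> real \<Rightarrow> real" where
  "fB T cP cB bP t X D =
     (if t < T then cB * (D - X) else cB * (D - X) + cP * X - bP * X)"

definition total_cost ::
  "nat \<Rightarrow> real \<Rightarrow> real \<Rightarrow> real \<Rightarrow> real \<Rightarrow> (nat \<Rightarrow> real) \<Rightarrow> (nat \<Rightarrow> real) \<Rightarrow> real" where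
  "total_cost T cP cI cB bP x D =
     (\<Sum>t=1..T. max (fI T cP cI bP t (cumX x t) (D t)) (fB T cP cB bP t (cumX x t) (D t)))"

definition Ud :: "nat \<Rightarrow> (nat \<Rightarrow> real) \<Rightarrow> (nat \<Rightarrow> real) \<Rightarrow> nat \<Rightarrow> (nat \<Rightarrow> real) set" where
  "Ud T Dhat Delta Gam = {D.
      (\<forall>t\<in>{1..<T}. D t \<le> D (t + 1)) \<and>
      (\<forall>t\<in>{1..T}. Dhat t - Delta t \<le> D t \<and> D t \<le> Dhat t + Delta t) \<and>
      card {t\<in>{1..T}. D t \<noteq> Dhat t} \<le> Gam}"

definition cand :: "nat \<Rightarrow> (nat \<Rightarrow> real) \<Rightarrow> (nat \<Rightarrow> real) \<Rightarrow> nat \<Rightarrow> real set" where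
  "cand T Dhat Delta k = {Dhat k - Delta k .. Dhat k + Delta k} \<inter>
      (\<Union>t\<in>{1..T}. {Dhat t - Delta t, Dhat t, Dhat t + Delta t})"

end

theory Submission
  imports Defs
begin

definition Vset :: "nat \<Rightarrow> (nat \<Rightarrow> real) \<Rightarrow> (nat \<Rightarrow> real) \<Rightarrow> real set" where
  "Vset T Dhat Delta = (\<Union>t\<in>{1..T}. {Dhat t - Delta t, Dhat t, Dhat t + Delta t})"

definition badvals :: "nat \<Rightarrow> (nat \<Rightarrow> real) \<Rightarrow> (nat \<Rightarrow> real) \<Rightarrow> (nat \<Rightarrow> real) \<Rightarrow> real set" where
  "badvals T Dhat Delta D = D ` {1..T} - Vset T Dhat Delta"

lemma finite_Vset: "finite (Vset T Dhat Delta)"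
  unfolding Vset_def by auto

lemma affine_fI: "fI T cP cI bP t X (l*p + (1-l)*q) = l * fI T cP cI bP t X p + (1-l) * fI T cP cI bP t X q"
  unfolding fI_def by (simp add: algebra_simps)

lemma affine_fB: "fB T cP cB bP t X (l*p + (1-l)*q) = l * fB T cP cB bP t X p + (1-l) * fB T cP cB bP t X q"
  unfolding fB_def by (simp add: algebra_simps)

lemma max_comb:
  fixes a b c d l :: real
  assumes "0 \<le> l" "l \<le> 1"
  shows "max (l*a + (1-l)*b) (l*c + (1-l)*d) \<le> l * max a c + (1-l) * max b d"
proof -
  have "l*a \<le> l * max a c" "l*c \<le> l * max a c" using assms by (simp_all add: mult_left_mono)
  moreover have "(1-l)*b \<le> (1-l) * max b d" "(1-l)*d \<le> (1-l) * max b d" using assms by (simp_all add: mult_left_mono)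
  ultimately show ?thesis by linarith
qed

lemma convG:
  assumes "0 \<le> l" "l \<le> 1"
  shows "max (fI T cP cI bP t X (l*p + (1-l)*q)) (fB T cP cB bP t X (l*p + (1-l)*q))
     \<le> l * max (fI T cP cI bP t X p) (fB T cP cB bP t X p) + (1-l) * max (fI T cP cI bP t X q) (fB T cP cB bP t X q)"
  unfolding affine_fI affine_fB using max_comb[OF assms] by blast

lemma step:
  assumes D: "D \<in> Ud T Dhat Delta Gam" and k: "k \<in> {1..T}" and kb: "D k \<notin> Vset T Dhat Delta"
  shows "\<exists>D'\<in>Ud T Dhat Delta Gam. total_cost T cP cI cB bP x D \<le> total_cost T cP cI cB bP x D'
           \<and> badvals T Dhat Delta D' \<subset> badvals T Dhat Delta D"
proof -
  define V where "V = Vset T Dhat Delta"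
  define v where "v = D k"
  define W where "W = V \<union> D ` {1..T}"
  define Up where "Up = {w\<in>W. w > v}"
  define Lo where "Lo = {w\<in>W. w < v}"
  have finW: "finite W" unfolding W_def V_def using finite_Vset by auto
  have Dm: "\<forall>t\<in>{1..<T}. D t \<le> D (t + 1)"
    and Di: "\<forall>t\<in>{1..T}. Dhat t - Delta t \<le> D t \<and> D t \<le> Dhat t + Delta t"
    and Dc: "card {t\<in>{1..T}. D t \<noteq> Dhat t} \<le> Gam" using D unfolding Ud_def by auto
  have vV: "v \<notin> V" using kb unfolding v_def V_def .
  have inV: "\<And>t. t \<in> {1..T} \<Longrightarrow> Dhat t - Delta t \<in> V \<and> Dhat t \<in> V \<and> Dhat t + Delta t \<in> V"
    unfolding V_def Vset_def by auto
  have lowlt: "\<And>t. t \<in> {1..T} \<Longrightarrow> D t = v \<Longrightarrow> Dhat t - Delta t \<in> Lo"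
  proof -
    fix t assume t: "t \<in> {1..T}" and e: "D t = v"
    have "Dhat t - Delta t \<noteq> v" using inV[OF t] vV by auto
    with Di t e have "Dhat t - Delta t < v" by force
    thus "Dhat t - Delta t \<in> Lo" unfolding Lo_def W_def using inV[OF t] by auto
  qed
  have upgt: "\<And>t. t \<in> {1..T} \<Longrightarrow> D t = v \<Longrightarrow> Dhat t + Delta t \<in> Up"
  proof -
    fix t assume t: "t \<in> {1..T}" and e: "D t = v"
    have "Dhat t + Delta t \<noteq> v" using inV[OF t] vV by auto
    with Di t e have "Dhat t + Delta t > v" by force
    thus "Dhat t + Delta t \<in> Up" unfolding Up_def W_def using inV[OF t] by auto
  qed
  have Upne: "Up \<noteq> {}" using upgt[OF k] v_def by auto
  have Lone: "Lo \<noteq> {}" using lowlt[OF k] v_def by auto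
  have finUp: "finite Up" "finite Lo" unfolding Up_def Lo_def using finW by auto
  define up where "up = Min Up"
  define lo where "lo = Max Lo"
  have upin: "up \<in> Up" unfolding up_def using finUp Upne by simp
  have loin: "lo \<in> Lo" unfolding lo_def using finUp Lone by simp
  have upmin: "\<And>w. w \<in> Up \<Longrightarrow> up \<le> w" unfolding up_def using finUp by simp
  have lomax: "\<And>w. w \<in> Lo \<Longrightarrow> w \<le> lo" unfolding lo_def using finUp by simp
  have lov: "lo < v" and vup: "v < up" using upin loin unfolding Up_def Lo_def by auto
  define Ds where "Ds = (\<lambda>s t. if D t = v then s else D t)"
  have memb: "Ds s \<in> Ud T Dhat Delta Gam" if s: "lo \<le> s" "s \<le> up" for s
  proof -
    have "\<forall>t\<in>{1..<T}. Ds s t \<le> Ds s (t + 1)"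
    proof
      fix t assume t: "t \<in> {1..<T}"
      have le: "D t \<le> D (t+1)" using Dm t by auto
      have t1: "t+1 \<in> {1..T}" "t \<in> {1..T}" using t by auto
      show "Ds s t \<le> Ds s (t + 1)"
      proof (cases "D t = v")
        case True
        show ?thesis
        proof (cases "D (t+1) = v")
          case True2: True
          then show ?thesis using True unfolding Ds_def by simp
        next
          case False
          hence "D (t+1) \<in> Up" using le True t1 unfolding Up_def W_def by auto
          hence "up \<le> D (t+1)" by (rule upmin)
          then show ?thesis using True False s unfolding Ds_def by simp
        qed
      next
        case False
        show ?thesis
        proof (cases "D (t+1) = v")
          case True
          hence "D t \<in> Lo" using le False t1 unfolding Lo_def W_def by auto
          hence "D t \<le> lo" by (rule lomax)
          then show ?thesis using True False s unfolding Ds_def by simp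
        next
          case False2: False
          then show ?thesis using False le unfolding Ds_def by simp
        qed
      qed
    qed
    moreover have "\<forall>t\<in>{1..T}. Dhat t - Delta t \<le> Ds s t \<and> Ds s t \<le> Dhat t + Delta t"
    proof
      fix t assume t: "t \<in> {1..T}"
      show "Dhat t - Delta t \<le> Ds s t \<and> Ds s t \<le> Dhat t + Delta t"
      proof (cases "D t = v")
        case True
        have "Dhat t - Delta t \<le> lo" using lomax[OF lowlt[OF t True]] .
        moreover have "up \<le> Dhat t + Delta t" using upmin[OF upgt[OF t True]] .
        ultimately show ?thesis using True s unfolding Ds_def by simp
      next
        case False
        then show ?thesis using Di t unfolding Ds_def by simp
      qed
    qed
    moreover have "card {t\<in>{1..T}. Ds s t \<noteq> Dhat t} \<le> Gam"
    proof -
      have "{t\<in>{1..T}. Ds s t \<noteq> Dhat t} \<subseteq> {t\<in>{1..T}. D t \<noteq> Dhat t}"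
      proof
        fix t assume "t \<in> {t\<in>{1..T}. Ds s t \<noteq> Dhat t}"
        hence t: "t \<in> {1..T}" and ne: "Ds s t \<noteq> Dhat t" by auto
        have "D t \<noteq> Dhat t"
        proof (cases "D t = v")
          case True
          then show ?thesis using inV[OF t] vV by auto
        next
          case False
          then show ?thesis using ne unfolding Ds_def by simp
        qed
        thus "t \<in> {t\<in>{1..T}. D t \<noteq> Dhat t}" using t by auto
      qed
      hence "card {t\<in>{1..T}. Ds s t \<noteq> Dhat t} \<le> card {t\<in>{1..T}. D t \<noteq> Dhat t}"
        by (intro card_mono) auto
      thus ?thesis using Dc by linarith
    qed
    ultimately show ?thesis unfolding Ud_def by blast
  qed
  define G where "G = (\<lambda>t s. max (fI T cP cI bP t (cumX x t) s) (fB T cP cB bP t (cumX x t) s))"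
  have tc: "\<And>E. total_cost T cP cI cB bP x E = (\<Sum>t=1..T. G t (E t))"
    unfolding total_cost_def G_def by simp
  define l where "l = (up - v) / (up - lo)"
  have l0: "0 \<le> l" "l \<le> 1" using lov vup unfolding l_def by (auto simp: field_simps)
  have lm: "l * (up - lo) = up - v" using lov vup unfolding l_def by simp
  have vl: "v = l * lo + (1 - l) * up"
  proof -
    have "l * lo + (1 - l) * up = up - l * (up - lo)" by (simp add: algebra_simps)
    thus ?thesis using lm by simp
  qed
  have pt: "G t (D t) \<le> l * G t (Ds lo t) + (1 - l) * G t (Ds up t)" for t
  proof (cases "D t = v")
    case True
    have "G t (D t) = G t (l * lo + (1 - l) * up)" using True vl by simp
    also have "\<dots> \<le> l * G t lo + (1 - l) * G t up"
      unfolding G_def by (rule convG[OF l0])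
    finally show ?thesis using True unfolding Ds_def by simp
  next
    case False
    then show ?thesis unfolding Ds_def by (simp add: algebra_simps)
  qed
  have "total_cost T cP cI cB bP x D \<le> (\<Sum>t=1..T. l * G t (Ds lo t) + (1 - l) * G t (Ds up t))"
    unfolding tc by (rule sum_mono) (rule pt)
  also have "\<dots> = l * total_cost T cP cI cB bP x (Ds lo) + (1 - l) * total_cost T cP cI cB bP x (Ds up)"
    unfolding tc by (simp add: sum.distrib sum_distrib_left)
  also have "\<dots> \<le> max (total_cost T cP cI cB bP x (Ds lo)) (total_cost T cP cI cB bP x (Ds up))"
  proof -
    have "l * total_cost T cP cI cB bP x (Ds lo) \<le> l * max (total_cost T cP cI cB bP x (Ds lo)) (total_cost T cP cI cB bP x (Ds up))"
      using l0 by (intro mult_left_mono) auto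
    moreover have "(1-l) * total_cost T cP cI cB bP x (Ds up) \<le> (1-l) * max (total_cost T cP cI cB bP x (Ds lo)) (total_cost T cP cI cB bP x (Ds up))"
      using l0 by (intro mult_left_mono) auto
    ultimately show ?thesis by (simp add: algebra_simps)
  qed
  finally have costle: "total_cost T cP cI cB bP x D \<le> max (total_cost T cP cI cB bP x (Ds lo)) (total_cost T cP cI cB bP x (Ds up))" .
  have bad: "badvals T Dhat Delta (Ds s) \<subset> badvals T Dhat Delta D" if s: "s \<in> W" "s \<noteq> v" for s
  proof -
    have sub: "badvals T Dhat Delta (Ds s) \<subseteq> badvals T Dhat Delta D - {v}"
    proof
      fix w assume "w \<in> badvals T Dhat Delta (Ds s)"
      then obtain t where t: "t \<in> {1..T}" and w: "w = Ds s t" and wV: "w \<notin> V"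
        unfolding badvals_def V_def by auto
      show "w \<in> badvals T Dhat Delta D - {v}"
      proof (cases "D t = v")
        case True
        hence "w = s" using w unfolding Ds_def by simp
        hence "w \<in> D ` {1..T}" using s wV unfolding W_def by auto
        thus ?thesis using wV \<open>w = s\<close> s unfolding badvals_def V_def by auto
      next
        case False
        hence "w = D t" using w unfolding Ds_def by simp
        thus ?thesis using wV t False unfolding badvals_def V_def by auto
      qed
    qed
    have "v \<in> badvals T Dhat Delta D" using k vV unfolding badvals_def V_def v_def by auto
    thus ?thesis using sub by auto
  qed
  have upW: "up \<in> W" "up \<noteq> v" using upin vup unfolding Up_def by auto
  have loW: "lo \<in> W" "lo \<noteq> v" using loin lov unfolding Lo_def by auto
  show ?thesis
  proof (cases "total_cost T cP cI cB bP x (Ds lo) \<le> total_cost T cP cI cB bP x (Ds up)")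
    case True
    have "total_cost T cP cI cB bP x D \<le> total_cost T cP cI cB bP x (Ds up)"
      using costle True by (simp add: max_def)
    moreover have "Ds up \<in> Ud T Dhat Delta Gam" using memb[of up] lov vup by simp
    ultimately show ?thesis using bad[OF upW] by blast
  next
    case False
    have "total_cost T cP cI cB bP x D \<le> total_cost T cP cI cB bP x (Ds lo)"
      using costle False by (simp add: max_def)
    moreover have "Ds lo \<in> Ud T Dhat Delta Gam" using memb[of lo] lov vup by simp
    ultimately show ?thesis using bad[OF loW] by blast
  qed
qed

lemma improve:
  "\<forall>D. D \<in> Ud T Dhat Delta Gam \<longrightarrow> card (badvals T Dhat Delta D) = n \<longrightarrow>
     (\<exists>D'\<in>Ud T Dhat Delta Gam. total_cost T cP cI cB bP x D \<le> total_cost T cP cI cB bP x D'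
       \<and> (\<forall>t\<in>{1..T}. D' t \<in> Vset T Dhat Delta))"
proof (induction n rule: less_induct)
  case (less n)
  show ?case
  proof (intro allI impI)
    fix D assume D: "D \<in> Ud T Dhat Delta Gam" and n: "card (badvals T Dhat Delta D) = n"
    show "\<exists>D'\<in>Ud T Dhat Delta Gam. total_cost T cP cI cB bP x D \<le> total_cost T cP cI cB bP x D'
       \<and> (\<forall>t\<in>{1..T}. D' t \<in> Vset T Dhat Delta)"
    proof (cases "\<forall>t\<in>{1..T}. D t \<in> Vset T Dhat Delta")
      case True
      then show ?thesis using D by auto
    next
      case False
      then obtain k where k: "k \<in> {1..T}" "D k \<notin> Vset T Dhat Delta" by auto
      from step[OF D k, of cP cI cB bP x] obtain D' where D': "D' \<in> Ud T Dhat Delta Gam"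
        "total_cost T cP cI cB bP x D \<le> total_cost T cP cI cB bP x D'"
        "badvals T Dhat Delta D' \<subset> badvals T Dhat Delta D" by blast
      have "finite (badvals T Dhat Delta D)" unfolding badvals_def by auto
      hence "card (badvals T Dhat Delta D') < n" using psubset_card_mono[OF _ D'(3)] n by simp
      with less D'(1) obtain D'' where "D'' \<in> Ud T Dhat Delta Gam"
        "total_cost T cP cI cB bP x D' \<le> total_cost T cP cI cB bP x D''"
        "\<forall>t\<in>{1..T}. D'' t \<in> Vset T Dhat Delta" by blast
      thus ?thesis using D'(2) by (meson order_trans)
    qed
  qed
qed

lemma Ud_cong:
  assumes "\<forall>t\<in>{1..T}. D t = E t" "D \<in> Ud T Dhat Delta Gam"
  shows "E \<in> Ud T Dhat Delta Gam"
proof -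
  have "{t\<in>{1..T}. E t \<noteq> Dhat t} = {t\<in>{1..T}. D t \<noteq> Dhat t}" using assms(1) by auto
  moreover have "\<forall>t\<in>{1..<T}. E t \<le> E (t + 1)" using assms unfolding Ud_def by auto
  ultimately show ?thesis using assms unfolding Ud_def by auto
qed

lemma cost_cong:
  assumes "\<forall>t\<in>{1..T}. D t = E t"
  shows "total_cost T cP cI cB bP x D = total_cost T cP cI cB bP x E"
  unfolding total_cost_def using assms by (intro sum.cong) auto

theorem lemma3:
  fixes T m Gam :: nat
    and cP cI cB bP :: real
    and A :: "nat \<Rightarrow> nat \<Rightarrow> real" and b :: "nat \<Rightarrow> real"
    and x Dhat Delta :: "nat \<Rightarrow> real"
  assumes "T \<ge> 1"
    and "\<forall>t\<in>{1..T}. 0 \<le> Dhat t"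
    and "\<forall>t\<in>{1..<T}. Dhat t \<le> Dhat (t + 1)"
    and "\<forall>t\<in>{1..T}. 0 \<le> Delta t \<and> Delta t \<le> Dhat t"
    and "Gam \<le> T"
    and "x \<in> plan_set T m A b"
  shows "\<exists>Dstar\<in>Ud T Dhat Delta Gam.
           (\<forall>D\<in>Ud T Dhat Delta Gam. total_cost T cP cI cB bP x D \<le> total_cost T cP cI cB bP x Dstar) \<and>
           (\<forall>k\<in>{1..T}. Dstar k \<in> cand T Dhat Delta k)"
proof -
  define S where "S = (PiE {1..T} (\<lambda>_. Vset T Dhat Delta)) \<inter> Ud T Dhat Delta Gam"
  define f where "f = total_cost T cP cI cB bP x"
  have finS: "finite S" unfolding S_def using finite_Vset by (intro finite_Int disjI1 finite_PiE) auto
  have hatU: "Dhat \<in> Ud T Dhat Delta Gam" using assms(3,4) unfolding Ud_def by auto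
  have "restrict Dhat {1..T} \<in> S" unfolding S_def
    using Ud_cong[OF _ hatU, of "restrict Dhat {1..T}"] by (auto simp: Vset_def)
  hence Sne: "S \<noteq> {}" by auto
  obtain Ds where Ds: "Ds \<in> S" "f Ds = Max (f ` S)"
    using Max_in[of "f ` S"] finS Sne by (metis empty_is_image finite_imageI imageE)
  have Dsmax: "\<And>E. E \<in> S \<Longrightarrow> f E \<le> f Ds" using Ds finS by simp
  have DsU: "Ds \<in> Ud T Dhat Delta Gam" using Ds unfolding S_def by auto
  show ?thesis
  proof (intro bexI[OF _ DsU] conjI ballI)
    fix D assume D: "D \<in> Ud T Dhat Delta Gam"
    from improve[rule_format, OF D refl, of cP cI cB bP x] obtain D' where D':
      "D' \<in> Ud T Dhat Delta Gam" "f D \<le> f D'" "\<forall>t\<in>{1..T}. D' t \<in> Vset T Dhat Delta"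
      unfolding f_def by blast
    have "restrict D' {1..T} \<in> S" unfolding S_def
      using Ud_cong[OF _ D'(1), of "restrict D' {1..T}"] D'(3) by auto
    moreover have "f (restrict D' {1..T}) = f D'" unfolding f_def by (rule cost_cong) auto
    ultimately show "total_cost T cP cI cB bP x D \<le> total_cost T cP cI cB bP x Ds"
      using Dsmax D'(2) unfolding f_def by fastforce
  next
    fix k assume k: "k \<in> {1..T}"
    have "Ds k \<in> Vset T Dhat Delta" using Ds(1) k unfolding S_def by auto
    moreover have "Dhat k - Delta k \<le> Ds k \<and> Ds k \<le> Dhat k + Delta k" using DsU k unfolding Ud_def by auto
    ultimately show "Ds k \<in> cand T Dhat Delta k" unfolding cand_def Vset_def by auto
  qed
qed

end
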